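(* Let $G$ and $H$ be connected graphs. If $\mu_t(G)=|\mathcal{S}(G)|$ or $\mu_t(H)=|\mathcal{S}(H)|$, then $$\mu_t(G\,\Box\,H)\le \mu_t(G)\,\mu_t(H).$$
   Context: All graphs are finite, simple and undirected. The Cartesian product $G\,\Box\,H$ has vertex set $V(G)\times V(H)$, with $(x,y)$ adjacent to $(x',y')$ iff either $x=x'$ and $yy'\in E(H)$, or $xx'\in E(G)$ and $y=y'$. Let $F$ be a connected graph and $X\subseteq V(F)$. Two vertices $x,y\in V(F)$ are $X$-visible if there exists a shortest $x,y$-path in $F$ none of whose internal vertices belongs to $X$. $X$ is a total mutual-visibility set of $F$ if every two vertices of $F$ are $X$-visible (the empty set is allowed). $\mu_t(F)$ is the maximum cardinality of a total mutual-visibility set of $F$. A vertex is simplicial if its neighbors induce a complete graph; $\mathcal{S}(F)$ is the set of simplicial vertices of $F$. *)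

theory Defs
  imports Main
begin

definition graph :: "'a set \<Rightarrow> ('a \<Rightarrow> 'a \<Rightarrow> bool) \<Rightarrow> bool" where
  "graph V E \<longleftrightarrow> finite V \<and> V \<noteq> {} \<and> (\<forall>x y. E x y \<longrightarrow> x \<in> V \<and> y \<in> V)
     \<and> (\<forall>x y. E x y \<longrightarrow> E y x) \<and> (\<forall>x. \<not> E x x)"

definition walk :: "'a set \<Rightarrow> ('a \<Rightarrow> 'a \<Rightarrow> bool) \<Rightarrow> 'a list \<Rightarrow> bool" where
  "walk V E p \<longleftrightarrow> p \<noteq> [] \<and> set p \<subseteq> V \<and> (\<forall>i. Suc i < length p \<longrightarrow> E (p ! i) (p ! Suc i))"

definition walk_betw :: "'a set \<Rightarrow> ('a \<Rightarrow> 'a \<Rightarrow> bool) \<Rightarrow> 'a \<Rightarrow> 'a list \<Rightarrow> 'a \<Rightarrow> bool" where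
  "walk_betw V E x p y \<longleftrightarrow> walk V E p \<and> hd p = x \<and> last p = y"

definition connected_graph :: "'a set \<Rightarrow> ('a \<Rightarrow> 'a \<Rightarrow> bool) \<Rightarrow> bool" where
  "connected_graph V E \<longleftrightarrow> graph V E \<and> (\<forall>x\<in>V. \<forall>y\<in>V. \<exists>p. walk_betw V E x p y)"

definition dist :: "'a set \<Rightarrow> ('a \<Rightarrow> 'a \<Rightarrow> bool) \<Rightarrow> 'a \<Rightarrow> 'a \<Rightarrow> nat" where
  "dist V E x y = (LEAST n. \<exists>p. walk_betw V E x p y \<and> length p = Suc n)"

text \<open>Shortest x,y-paths (a walk of minimum length is automatically a path).\<close>
definition shortest_path :: "'a set \<Rightarrow> ('a \<Rightarrow> 'a \<Rightarrow> bool) \<Rightarrow> 'a \<Rightarrow> 'a list \<Rightarrow> 'a \<Rightarrow> bool" where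
  "shortest_path V E x p y \<longleftrightarrow> walk_betw V E x p y \<and> length p = Suc (dist V E x y)"

definition internal :: "'a list \<Rightarrow> 'a set" where
  "internal p = set (butlast (tl p))"

definition X_visible :: "'a set \<Rightarrow> ('a \<Rightarrow> 'a \<Rightarrow> bool) \<Rightarrow> 'a set \<Rightarrow> 'a \<Rightarrow> 'a \<Rightarrow> bool" where
  "X_visible V E X x y \<longleftrightarrow> (\<exists>p. shortest_path V E x p y \<and> internal p \<inter> X = {})"

definition total_mutual_visibility_set :: "'a set \<Rightarrow> ('a \<Rightarrow> 'a \<Rightarrow> bool) \<Rightarrow> 'a set \<Rightarrow> bool" where
  "total_mutual_visibility_set V E X \<longleftrightarrow> X \<subseteq> V \<and> (\<forall>x\<in>V. \<forall>y\<in>V. X_visible V E X x y)"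

definition mu_t :: "'a set \<Rightarrow> ('a \<Rightarrow> 'a \<Rightarrow> bool) \<Rightarrow> nat" where
  "mu_t V E = Max (card ` {X. total_mutual_visibility_set V E X})"

definition simplicial :: "'a set \<Rightarrow> ('a \<Rightarrow> 'a \<Rightarrow> bool) \<Rightarrow> 'a \<Rightarrow> bool" where
  "simplicial V E v \<longleftrightarrow> v \<in> V \<and> (\<forall>x y. E v x \<and> E v y \<and> x \<noteq> y \<longrightarrow> E x y)"

definition simplicial_set :: "'a set \<Rightarrow> ('a \<Rightarrow> 'a \<Rightarrow> bool) \<Rightarrow> 'a set" where
  "simplicial_set V E = {v. simplicial V E v}"

definition cart_edges :: "('a \<Rightarrow> 'a \<Rightarrow> bool) \<Rightarrow> ('b \<Rightarrow> 'b \<Rightarrow> bool) \<Rightarrow> 'a \<times> 'b \<Rightarrow> 'a \<times> 'b \<Rightarrow> bool" where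
  "cart_edges EG EH u w \<longleftrightarrow>
     (fst u = fst w \<and> EH (snd u) (snd w)) \<or> (EG (fst u) (fst w) \<and> snd u = snd w)"

end

theory Submission
  imports Defs
begin

lemma walk_single[simp]: "walk V E [a] \<longleftrightarrow> a \<in> V"
  by (auto simp: walk_def)

lemma walk_Cons2: "walk V E (a # b # p) \<longleftrightarrow> a \<in> V \<and> E a b \<and> walk V E (b # p)"
proof
  assume w: "walk V E (a # b # p)"
  have all: "\<forall>i. Suc i < length (a#b#p) \<longrightarrow> E ((a#b#p)!i) ((a#b#p)!Suc i)"
    using w unfolding walk_def by (rule conjunct2[THEN conjunct2])
  have "E a b" using all[rule_format, of 0] by simp
  moreover have "walk V E (b # p)" unfolding walk_def
  proof (intro conjI allI impI)
    show "b # p \<noteq> []" by simp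
    show "set (b # p) \<subseteq> V" using w unfolding walk_def by simp
    fix i assume "Suc i < length (b # p)"
    then have "Suc (Suc i) < length (a # b # p)" by simp
    then have "E ((a#b#p) ! Suc i) ((a#b#p) ! Suc (Suc i))" using all by blast
    then show "E ((b # p) ! i) ((b # p) ! Suc i)" by simp
  qed
  moreover have "a \<in> V" using w unfolding walk_def by simp
  ultimately show "a \<in> V \<and> E a b \<and> walk V E (b # p)" by blast
next
  assume "a \<in> V \<and> E a b \<and> walk V E (b # p)"
  then have h: "a \<in> V" "E a b" "walk V E (b # p)" by auto
  show "walk V E (a # b # p)" unfolding walk_def
  proof (intro conjI allI impI)
    show "a # b # p \<noteq> []" by simp
    show "set (a # b # p) \<subseteq> V" using h unfolding walk_def by simp
    fix i assume i: "Suc i < length (a # b # p)"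
    show "E ((a # b # p) ! i) ((a # b # p) ! Suc i)"
    proof (cases i)
      case 0 then show ?thesis using h by simp
    next
      case (Suc k)
      then have "Suc k < length (b # p)" using i by simp
      then have "E ((b # p) ! k) ((b # p) ! Suc k)" using h(3) unfolding walk_def by (elim conjE) blast
      then show ?thesis using Suc by simp
    qed
  qed
qed

lemma walk_append:
  assumes "xs \<noteq> []" "ys \<noteq> []"
  shows "walk V E (xs @ ys) \<longleftrightarrow> walk V E xs \<and> walk V E ys \<and> E (last xs) (hd ys)"
  using assms(1)
proof (induction xs)
  case Nil then show ?case by simp
next
  case (Cons a xs)
  show ?case
  proof (cases xs)
    case Nil
    then show ?thesis using assms(2) by (cases ys) (auto simp: walk_Cons2)
  next
    case (Cons b xs')
    then show ?thesis using Cons.IH by (auto simp: walk_Cons2)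
  qed
qed

lemma walk_hd_in: "walk V E p \<Longrightarrow> hd p \<in> V"
  by (auto simp: walk_def)

lemma dist_le: "walk_betw V E x p y \<Longrightarrow> dist V E x y < length p"
proof -
  assume a: "walk_betw V E x p y"
  then have "p \<noteq> []" by (auto simp: walk_betw_def walk_def)
  then obtain n where n: "length p = Suc n" by (cases p) auto
  have "dist V E x y \<le> n" unfolding dist_def by (rule Least_le) (use a n in blast)
  then show ?thesis using n by simp
qed

lemma dist_exists:
  assumes "\<exists>p. walk_betw V E x p y"
  shows "\<exists>p. shortest_path V E x p y"
proof -
  obtain p where a: "walk_betw V E x p y" using assms by blast
  then have "p \<noteq> []" by (auto simp: walk_betw_def walk_def)
  then obtain n where n: "length p = Suc n" by (cases p) auto
  have "\<exists>p. walk_betw V E x p y \<and> length p = Suc (dist V E x y)"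
    unfolding dist_def by (rule LeastI[of _ n]) (use a n in blast)
  then show ?thesis by (auto simp: shortest_path_def)
qed


lemma walk_betw_ne: "walk_betw V E x p y \<Longrightarrow> p \<noteq> []"
  by (auto simp: walk_betw_def walk_def)

lemma internal_split:
  assumes "v \<in> internal p"
  shows "\<exists>xs ys. p = xs @ v # ys \<and> xs \<noteq> [] \<and> ys \<noteq> []"
proof -
  obtain a r where p: "p = a # r" using assms by (cases p) (auto simp: internal_def)
  have "r \<noteq> []" using assms p by (auto simp: internal_def)
  then obtain m c where r: "r = m @ [c]" by (cases r rule: rev_exhaust) auto
  have "v \<in> set m" using assms p r by (simp add: internal_def)
  then obtain m1 m2 where "m = m1 @ v # m2" by (meson split_list)
  then have "p = (a # m1) @ v # (m2 @ [c])" using p r by simp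
  then show ?thesis by blast
qed

lemma simplicial_not_internal:
  assumes g: "graph V E" and s: "simplicial V E v" and sp: "shortest_path V E x p y"
  shows "v \<notin> internal p"
proof
  assume "v \<in> internal p"
  from internal_split[OF this] obtain xs ys where p: "p = xs @ v # ys" and xs: "xs \<noteq> []" and ys: "ys \<noteq> []"
    by (elim exE conjE)
  obtain t ys' where ys': "ys = t # ys'" using ys by (meson neq_Nil_conv)
  have w: "walk V E p" and hx: "hd p = x" and ly: "last p = y"
    and len: "length p = Suc (dist V E x y)"
    using sp by (auto simp: shortest_path_def walk_betw_def)
  have wxs: "walk V E xs" and wv: "walk V E (v # ys)" and e1: "E (last xs) v"
    using w walk_append[OF xs, of "v # ys"] unfolding p by simp_all
  have e2: "E v t" and wys: "walk V E ys" using wv unfolding ys' walk_Cons2 by blast+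
  have e1': "E v (last xs)" using e1 g by (auto simp: graph_def)
  have hxs: "hd xs = x" using hx p xs by simp
  have lys: "last ys = y" using ly p ys by simp
  show False
  proof (cases "last xs = t")
    case False
    then have "E (last xs) t" using s e1' e2 unfolding simplicial_def by blast
    then have "walk V E (xs @ ys)" using walk_append[OF xs ys] wxs wys ys' by simp
    then have "walk_betw V E x (xs @ ys) y" using hxs lys xs ys by (simp add: walk_betw_def)
    from dist_le[OF this] show False using len p by simp
  next
    case True
    show False
    proof (cases "ys' = []")
      case True
      then have "walk_betw V E x xs y" using wxs hxs lys ys' \<open>last xs = t\<close> by (simp add: walk_betw_def)
      from dist_le[OF this] show False using len p by simp
    next
      case False
      obtain u ys'' where u: "ys' = u # ys''" using False by (meson neq_Nil_conv)
      have "E t u" "walk V E ys'" using wys unfolding ys' u walk_Cons2 by blast+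
      then have "walk V E (xs @ ys')" using walk_append[OF xs False] wxs \<open>last xs = t\<close> u by simp
      then have "walk_betw V E x (xs @ ys') y" using hxs lys xs ys' False by (simp add: walk_betw_def)
      from dist_le[OF this] show False using len p ys' by simp
    qed
  qed
qed

lemma tmv_union_simplicial:
  assumes g: "graph V E" and X: "total_mutual_visibility_set V E X"
  shows "total_mutual_visibility_set V E (X \<union> simplicial_set V E)"
  unfolding total_mutual_visibility_set_def
proof (intro conjI ballI)
  show "X \<union> simplicial_set V E \<subseteq> V"
    using X by (auto simp: total_mutual_visibility_set_def simplicial_set_def simplicial_def)
  fix x y assume "x \<in> V" "y \<in> V"
  then obtain p where sp: "shortest_path V E x p y" and i: "internal p \<inter> X = {}"
    using X unfolding total_mutual_visibility_set_def X_visible_def by blast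
  have "internal p \<inter> simplicial_set V E = {}"
    using simplicial_not_internal[OF g _ sp] by (auto simp: simplicial_set_def)
  then show "X_visible V E (X \<union> simplicial_set V E) x y"
    using sp i by (auto simp: X_visible_def)
qed

lemma tmv_subset:
  "total_mutual_visibility_set V E X \<Longrightarrow> Y \<subseteq> X \<Longrightarrow> total_mutual_visibility_set V E Y"
  by (auto simp: total_mutual_visibility_set_def X_visible_def) blast

lemma card_le_mu:
  assumes "finite V" "total_mutual_visibility_set V E Y"
  shows "card Y \<le> mu_t V E"
proof -
  have "{X. total_mutual_visibility_set V E X} \<subseteq> Pow V"
    by (auto simp: total_mutual_visibility_set_def)
  then have "finite {X. total_mutual_visibility_set V E X}" using assms(1) finite_subset by blast
  then show ?thesis unfolding mu_t_def using assms(2) by (auto intro: Max_ge)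
qed

lemma mu_attained:
  assumes "finite V" "\<forall>x\<in>V. \<forall>y\<in>V. \<exists>p. walk_betw V E x p y"
  shows "\<exists>X. total_mutual_visibility_set V E X \<and> card X = mu_t V E"
proof -
  have "{X. total_mutual_visibility_set V E X} \<subseteq> Pow V"
    by (auto simp: total_mutual_visibility_set_def)
  then have fin: "finite (card ` {X. total_mutual_visibility_set V E X})"
    using assms(1) finite_subset by blast
  have "total_mutual_visibility_set V E {}"
    using assms(2) dist_exists by (fastforce simp: total_mutual_visibility_set_def X_visible_def)
  then have "card ` {X. total_mutual_visibility_set V E X} \<noteq> {}" by blast
  from Max_in[OF fin this] show ?thesis unfolding mu_t_def by auto
qed


lemma walk_concat:
  assumes "walk V E p" "walk V E q" "last p = hd q"
  shows "walk V E (p @ tl q) \<and> hd (p @ tl q) = hd p \<and> last (p @ tl q) = last q"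
proof -
  have pne: "p \<noteq> []" and qne: "q \<noteq> []" using assms by (auto simp: walk_def)
  obtain c q' where q: "q = c # q'" using qne by (meson neq_Nil_conv)
  show ?thesis
  proof (cases "q' = []")
    case True
    then show ?thesis using assms(1,3) q pne by simp
  next
    case False
    obtain d q'' where q': "q' = d # q''" using False by (meson neq_Nil_conv)
    have "E c d" "walk V E q'" using assms(2) unfolding q q' walk_Cons2 by blast+
    then have "walk V E (p @ q')" using walk_append[OF pne False] assms(1,3) q q' by simp
    then show ?thesis using q False pne by simp
  qed
qed

lemma internal_map: "internal (map f q) = f ` internal q"
  by (simp add: internal_def map_tl[symmetric] map_butlast[symmetric])

lemma internal_subset: "internal q \<subseteq> set q"
  unfolding internal_def by (cases q) (auto dest: in_set_butlastD)

lemma lift_G: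
  assumes "walk VG EG p" "h \<in> VH"
  shows "walk (VG \<times> VH) (cart_edges EG EH) (map (\<lambda>a. (a, h)) p)"
  using assms unfolding walk_def cart_edges_def by auto

lemma lift_H:
  assumes "walk VH EH p" "g \<in> VG"
  shows "walk (VG \<times> VH) (cart_edges EG EH) (map (\<lambda>b. (g, b)) p)"
  using assms unfolding walk_def cart_edges_def by auto

lemma prod_walks:
  assumes cG: "connected_graph VG EG" and cH: "connected_graph VH EH"
    and x: "x \<in> VG \<times> VH" and y: "y \<in> VG \<times> VH"
  shows "\<exists>p. walk_betw (VG \<times> VH) (cart_edges EG EH) x p y"
proof -
  obtain u h v h' where xy: "x = (u, h)" "y = (v, h')" by (cases x, cases y) auto
  have uv: "u \<in> VG" "v \<in> VG" "h \<in> VH" "h' \<in> VH" using x y xy by auto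
  obtain pG where pG: "walk_betw VG EG u pG v" using cG uv unfolding connected_graph_def by blast
  obtain pH where pH: "walk_betw VH EH h pH h'" using cH uv unfolding connected_graph_def by blast
  have ne: "pG \<noteq> []" "pH \<noteq> []" using walk_betw_ne[OF pG] walk_betw_ne[OF pH] by auto
  let ?L1 = "map (\<lambda>a. (a, h)) pG" and ?L2 = "map (\<lambda>b. (v, b)) pH"
  have w1: "walk (VG \<times> VH) (cart_edges EG EH) ?L1"
    using lift_G[of VG EG pG h VH EH] pG uv unfolding walk_betw_def by simp
  have w2: "walk (VG \<times> VH) (cart_edges EG EH) ?L2"
    using lift_H[of VH EH pH v VG EG] pH uv unfolding walk_betw_def by simp
  have "last ?L1 = hd ?L2" using pG pH ne by (simp add: walk_betw_def last_map hd_map)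
  from walk_concat[OF w1 w2 this] show ?thesis
    using pG pH ne xy unfolding walk_betw_def by (auto simp: last_map hd_map)
qed

lemma proj_G:
  "walk (VG \<times> VH) (cart_edges EG EH) q \<Longrightarrow> \<exists>p. walk VG EG p \<and> hd p = fst (hd q) \<and> last p = fst (last q)
     \<and> length p \<le> length q \<and> ((\<exists>x\<in>set q. snd x \<noteq> snd (hd q)) \<longrightarrow> length p < length q)"
proof (induction q)
  case Nil thus ?case by (simp add: walk_def)
next
  case (Cons a q)
  show ?case
  proof (cases q)
    case Nil
    have "fst a \<in> VG" using Cons.prems Nil by auto
    then show ?thesis using Nil by (intro exI[of _ "[fst a]"]) simp
  next
    case (Cons b q')
    have e: "cart_edges EG EH a b" and w: "walk (VG \<times> VH) (cart_edges EG EH) q"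
      and a: "a \<in> VG \<times> VH"
      using Cons.prems unfolding Cons walk_Cons2 by blast+
    obtain p where p: "walk VG EG p" "hd p = fst (hd q)" "last p = fst (last q)" "length p \<le> length q"
      "(\<exists>x\<in>set q. snd x \<noteq> snd (hd q)) \<longrightarrow> length p < length q"
      using Cons.IH w by blast
    show ?thesis
    proof (cases "fst a = fst b")
      case True
      have "hd p = fst (hd (a # q))" using p(2) True Cons by simp
      moreover have "last p = fst (last (a # q))" using p(3) Cons by simp
      moreover have "length p < length (a # q)" using p(4) by simp
      ultimately show ?thesis using p(1) by (intro exI[of _ p]) simp
    next
      case False
      then have ab: "EG (fst a) (fst b)" "snd a = snd b" using e by (auto simp: cart_edges_def)
      have "p \<noteq> []" using p(1) by (auto simp: walk_def)
      then obtain c p' where cp: "p = c # p'" by (meson neq_Nil_conv)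
      have "c = fst b" using p(2) cp Cons by simp
      then have "walk VG EG (fst a # p)" using p(1) ab a cp walk_Cons2[of VG EG "fst a" c p'] by auto
      moreover have "(\<exists>x\<in>set (a # q). snd x \<noteq> snd (hd (a # q))) \<longrightarrow> length (fst a # p) < length (a # q)"
      proof
        assume "\<exists>x\<in>set (a # q). snd x \<noteq> snd (hd (a # q))"
        then obtain x where "x \<in> set q" "snd x \<noteq> snd (hd q)" using ab Cons by auto
        then show "length (fst a # p) < length (a # q)" using p(5) by auto
      qed
      moreover have "last (fst a # p) = fst (last (a # q))" using p(3) cp Cons by simp
      moreover have "length (fst a # p) \<le> length (a # q)" using p(4) by simp
      ultimately show ?thesis by (intro exI[of _ "fst a # p"]) simp
    qed
  qed
qed


lemma layer_G:
  assumes cG: "connected_graph VG EG" and gH: "graph VH EH"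
    and u: "u \<in> VG" and v: "v \<in> VG" and h: "h \<in> VH"
    and sp: "shortest_path (VG \<times> VH) (cart_edges EG EH) (u, h) q (v, h)"
  shows "shortest_path VG EG u (map fst q) v \<and> (\<forall>x\<in>set q. snd x = h)"
proof -
  have "\<forall>x\<in>VG. \<forall>y\<in>VG. \<exists>p. walk_betw VG EG x p y" using cG by (simp add: connected_graph_def)
  then have "\<exists>p. walk_betw VG EG u p v" using u v by simp
  from dist_exists[OF this] obtain pG where pG: "shortest_path VG EG u pG v" by (elim exE)
  have wpG: "walk VG EG pG" and hpG: "hd pG = u" and lpG: "last pG = v"
    and lenpG: "length pG = Suc (dist VG EG u v)"
    using pG by (simp_all add: shortest_path_def walk_betw_def)
  have nepG: "pG \<noteq> []" using wpG by (simp add: walk_def)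
  have "walk_betw (VG \<times> VH) (cart_edges EG EH) (u, h) (map (\<lambda>a. (a, h)) pG) (v, h)"
    unfolding walk_betw_def using lift_G[OF wpG h, of EH] hpG lpG nepG by (simp add: hd_map last_map)
  from dist_le[OF this] have d1: "dist (VG \<times> VH) (cart_edges EG EH) (u, h) (v, h) < length pG" by simp
  have wq: "walk (VG \<times> VH) (cart_edges EG EH) q" and hq: "hd q = (u, h)" and lq: "last q = (v, h)"
    and lenq: "length q = Suc (dist (VG \<times> VH) (cart_edges EG EH) (u, h) (v, h))"
    using sp by (simp_all add: shortest_path_def walk_betw_def)
  obtain p where p: "walk VG EG p" "hd p = fst (hd q)" "last p = fst (last q)" "length p \<le> length q"
      "(\<exists>x\<in>set q. snd x \<noteq> snd (hd q)) \<longrightarrow> length p < length q"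
    using proj_G[OF wq] by (elim exE conjE) simp
  have "walk_betw VG EG u p v" using p hq lq by (simp add: walk_betw_def)
  from dist_le[OF this] have d2: "dist VG EG u v < length p" .
  have eqlen: "length p = length q" using d1 d2 lenq lenpG p(4) by linarith
  have allh: "\<forall>x\<in>set q. snd x = h"
  proof (rule ccontr)
    assume "\<not> (\<forall>x\<in>set q. snd x = h)"
    then have "\<exists>x\<in>set q. snd x \<noteq> snd (hd q)" using hq by auto
    then show False using p(5) eqlen by simp
  qed
  have gHd: "\<forall>x. \<not> EH x x" and fin: "\<forall>x y. EH x y \<longrightarrow> x \<in> VH \<and> y \<in> VH"
    using gH by (simp_all add: graph_def)
  have allw: "\<forall>i. Suc i < length q \<longrightarrow> cart_edges EG EH (q ! i) (q ! Suc i)"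
    using wq unfolding walk_def by (rule conjunct2[THEN conjunct2])
  have setq: "set q \<subseteq> VG \<times> VH" and neq: "q \<noteq> []" using wq unfolding walk_def by simp_all
  have wm: "walk VG EG (map fst q)" unfolding walk_def
  proof (intro conjI allI impI)
    show "map fst q \<noteq> []" using neq by simp
    show "set (map fst q) \<subseteq> VG" using setq by auto
    fix i assume i: "Suc i < length (map fst q)"
    then have c: "cart_edges EG EH (q ! i) (q ! Suc i)" using allw by simp
    have "snd (q ! i) = h" "snd (q ! Suc i) = h" using allh i by simp_all
    then have "EG (fst (q ! i)) (fst (q ! Suc i))" using c gHd unfolding cart_edges_def by metis
    then show "EG (map fst q ! i) (map fst q ! Suc i)" using i by simp
  qed
  have "dist VG EG u v = dist (VG \<times> VH) (cart_edges EG EH) (u, h) (v, h)"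
    using d1 d2 lenq lenpG eqlen by linarith
  then have "shortest_path VG EG u (map fst q) v"
    unfolding shortest_path_def walk_betw_def using wm hq lq neq lenq by (simp add: hd_map last_map)
  then show ?thesis using allh by simp
qed

lemma tmv_layer_G:
  assumes cG: "connected_graph VG EG" and cH: "connected_graph VH EH"
    and X: "total_mutual_visibility_set (VG \<times> VH) (cart_edges EG EH) X" and h: "h \<in> VH"
  shows "total_mutual_visibility_set VG EG {g. (g, h) \<in> X}"
  unfolding total_mutual_visibility_set_def
proof (intro conjI ballI)
  have XV: "X \<subseteq> VG \<times> VH" using X by (simp add: total_mutual_visibility_set_def)
  then show "{g. (g, h) \<in> X} \<subseteq> VG" by auto
  fix u v assume u: "u \<in> VG" and v: "v \<in> VG"
  have "\<forall>x\<in>VG \<times> VH. \<forall>y\<in>VG \<times> VH. X_visible (VG \<times> VH) (cart_edges EG EH) X x y"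
    using X by (simp add: total_mutual_visibility_set_def)
  then have "X_visible (VG \<times> VH) (cart_edges EG EH) X (u, h) (v, h)" using u v h by simp
  then obtain q where sp: "shortest_path (VG \<times> VH) (cart_edges EG EH) (u, h) q (v, h)"
    and iq: "internal q \<inter> X = {}" unfolding X_visible_def by (elim exE conjE)
  have gH: "graph VH EH" using cH by (simp add: connected_graph_def)
  have L: "shortest_path VG EG u (map fst q) v" "\<forall>x\<in>set q. snd x = h"
    using layer_G[OF cG gH u v h sp] by simp_all
  have "internal (map fst q) \<inter> {g. (g, h) \<in> X} = {}"
  proof (rule ccontr)
    assume "internal (map fst q) \<inter> {g. (g, h) \<in> X} \<noteq> {}"
    then obtain g where g1: "g \<in> internal (map fst q)" and g2: "(g, h) \<in> X" by auto
    then obtain x where x: "x \<in> internal q" "g = fst x" by (auto simp: internal_map)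
    have "x \<in> set q" using internal_subset[of q] x(1) by (rule subsetD)
    then have "snd x = h" using L(2) by simp
    then have "x = (g, h)" using x(2) by (cases x) simp
    then show False using iq x(1) g2 by auto
  qed
  then show "X_visible VG EG {g. (g, h) \<in> X} u v" using L(1) unfolding X_visible_def by blast
qed

lemma proj_H:
  "walk (VG \<times> VH) (cart_edges EG EH) q \<Longrightarrow> \<exists>p. walk VH EH p \<and> hd p = snd (hd q) \<and> last p = snd (last q)
     \<and> length p \<le> length q \<and> ((\<exists>x\<in>set q. fst x \<noteq> fst (hd q)) \<longrightarrow> length p < length q)"
proof (induction q)
  case Nil thus ?case by (simp add: walk_def)
next
  case (Cons a q)
  show ?case
  proof (cases q)
    case Nil
    have "snd a \<in> VH" using Cons.prems Nil by auto
    then show ?thesis using Nil by (intro exI[of _ "[snd a]"]) simp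
  next
    case (Cons b q')
    have e: "cart_edges EG EH a b" and w: "walk (VG \<times> VH) (cart_edges EG EH) q"
      and a: "a \<in> VG \<times> VH"
      using Cons.prems unfolding Cons walk_Cons2 by blast+
    obtain p where p: "walk VH EH p" "hd p = snd (hd q)" "last p = snd (last q)" "length p \<le> length q"
      "(\<exists>x\<in>set q. fst x \<noteq> fst (hd q)) \<longrightarrow> length p < length q"
      using Cons.IH w by blast
    show ?thesis
    proof (cases "snd a = snd b")
      case True
      have "hd p = snd (hd (a # q))" using p(2) True Cons by simp
      moreover have "last p = snd (last (a # q))" using p(3) Cons by simp
      moreover have "length p < length (a # q)" using p(4) by simp
      ultimately show ?thesis using p(1) by (intro exI[of _ p]) simp
    next
      case False
      then have ab: "EH (snd a) (snd b)" "fst a = fst b" using e by (auto simp: cart_edges_def)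
      have "p \<noteq> []" using p(1) by (auto simp: walk_def)
      then obtain c p' where cp: "p = c # p'" by (meson neq_Nil_conv)
      have "c = snd b" using p(2) cp Cons by simp
      then have "walk VH EH (snd a # p)" using p(1) ab a cp walk_Cons2[of VH EH "snd a" c p'] by auto
      moreover have "(\<exists>x\<in>set (a # q). fst x \<noteq> fst (hd (a # q))) \<longrightarrow> length (snd a # p) < length (a # q)"
      proof
        assume "\<exists>x\<in>set (a # q). fst x \<noteq> fst (hd (a # q))"
        then obtain x where "x \<in> set q" "fst x \<noteq> fst (hd q)" using ab Cons by auto
        then show "length (snd a # p) < length (a # q)" using p(5) by auto
      qed
      moreover have "last (snd a # p) = snd (last (a # q))" using p(3) cp Cons by simp
      moreover have "length (snd a # p) \<le> length (a # q)" using p(4) by simp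
      ultimately show ?thesis by (intro exI[of _ "snd a # p"]) simp
    qed
  qed
qed


lemma layer_H:
  assumes cH: "connected_graph VH EH" and gG: "graph VG EG"
    and u: "u \<in> VH" and v: "v \<in> VH" and h: "h \<in> VG"
    and sp: "shortest_path (VG \<times> VH) (cart_edges EG EH) (h, u) q (h, v)"
  shows "shortest_path VH EH u (map snd q) v \<and> (\<forall>x\<in>set q. fst x = h)"
proof -
  have "\<forall>x\<in>VH. \<forall>y\<in>VH. \<exists>p. walk_betw VH EH x p y" using cH by (simp add: connected_graph_def)
  then have "\<exists>p. walk_betw VH EH u p v" using u v by simp
  from dist_exists[OF this] obtain pG where pG: "shortest_path VH EH u pG v" by (elim exE)
  have wpG: "walk VH EH pG" and hpG: "hd pG = u" and lpG: "last pG = v"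
    and lenpG: "length pG = Suc (dist VH EH u v)"
    using pG by (simp_all add: shortest_path_def walk_betw_def)
  have nepG: "pG \<noteq> []" using wpG by (simp add: walk_def)
  have "walk_betw (VG \<times> VH) (cart_edges EG EH) (h, u) (map (\<lambda>a. (h, a)) pG) (h, v)"
    unfolding walk_betw_def using lift_H[OF wpG h, of EG] hpG lpG nepG by (simp add: hd_map last_map)
  from dist_le[OF this] have d1: "dist (VG \<times> VH) (cart_edges EG EH) (h, u) (h, v) < length pG" by simp
  have wq: "walk (VG \<times> VH) (cart_edges EG EH) q" and hq: "hd q = (h, u)" and lq: "last q = (h, v)"
    and lenq: "length q = Suc (dist (VG \<times> VH) (cart_edges EG EH) (h, u) (h, v))"
    using sp by (simp_all add: shortest_path_def walk_betw_def)
  obtain p where p: "walk VH EH p" "hd p = snd (hd q)" "last p = snd (last q)" "length p \<le> length q"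
      "(\<exists>x\<in>set q. fst x \<noteq> fst (hd q)) \<longrightarrow> length p < length q"
    using proj_H[OF wq] by (elim exE conjE) simp
  have "walk_betw VH EH u p v" using p hq lq by (simp add: walk_betw_def)
  from dist_le[OF this] have d2: "dist VH EH u v < length p" .
  have eqlen: "length p = length q" using d1 d2 lenq lenpG p(4) by linarith
  have allh: "\<forall>x\<in>set q. fst x = h"
  proof (rule ccontr)
    assume "\<not> (\<forall>x\<in>set q. fst x = h)"
    then have "\<exists>x\<in>set q. fst x \<noteq> fst (hd q)" using hq by auto
    then show False using p(5) eqlen by simp
  qed
  have gGd: "\<forall>x. \<not> EG x x" and fin: "\<forall>x y. EG x y \<longrightarrow> x \<in> VG \<and> y \<in> VG"
    using gG by (simp_all add: graph_def)
  have allw: "\<forall>i. Suc i < length q \<longrightarrow> cart_edges EG EH (q ! i) (q ! Suc i)"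
    using wq unfolding walk_def by (rule conjunct2[THEN conjunct2])
  have setq: "set q \<subseteq> VG \<times> VH" and neq: "q \<noteq> []" using wq unfolding walk_def by simp_all
  have wm: "walk VH EH (map snd q)" unfolding walk_def
  proof (intro conjI allI impI)
    show "map snd q \<noteq> []" using neq by simp
    show "set (map snd q) \<subseteq> VH" using setq by auto
    fix i assume i: "Suc i < length (map snd q)"
    then have c: "cart_edges EG EH (q ! i) (q ! Suc i)" using allw by simp
    have "fst (q ! i) = h" "fst (q ! Suc i) = h" using allh i by simp_all
    then have "EH (snd (q ! i)) (snd (q ! Suc i))" using c gGd unfolding cart_edges_def by metis
    then show "EH (map snd q ! i) (map snd q ! Suc i)" using i by simp
  qed
  have "dist VH EH u v = dist (VG \<times> VH) (cart_edges EG EH) (h, u) (h, v)"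
    using d1 d2 lenq lenpG eqlen by linarith
  then have "shortest_path VH EH u (map snd q) v"
    unfolding shortest_path_def walk_betw_def using wm hq lq neq lenq by (simp add: hd_map last_map)
  then show ?thesis using allh by simp
qed

lemma tmv_layer_H:
  assumes cH: "connected_graph VH EH" and cG: "connected_graph VG EG"
    and X: "total_mutual_visibility_set (VG \<times> VH) (cart_edges EG EH) X" and h: "h \<in> VG"
  shows "total_mutual_visibility_set VH EH {g. (h, g) \<in> X}"
  unfolding total_mutual_visibility_set_def
proof (intro conjI ballI)
  have XV: "X \<subseteq> VG \<times> VH" using X by (simp add: total_mutual_visibility_set_def)
  then show "{g. (h, g) \<in> X} \<subseteq> VH" by auto
  fix u v assume u: "u \<in> VH" and v: "v \<in> VH"
  have "\<forall>x\<in>VG \<times> VH. \<forall>y\<in>VG \<times> VH. X_visible (VG \<times> VH) (cart_edges EG EH) X x y"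
    using X by (simp add: total_mutual_visibility_set_def)
  then have "X_visible (VG \<times> VH) (cart_edges EG EH) X (h, u) (h, v)" using u v h by simp
  then obtain q where sp: "shortest_path (VG \<times> VH) (cart_edges EG EH) (h, u) q (h, v)"
    and iq: "internal q \<inter> X = {}" unfolding X_visible_def by (elim exE conjE)
  have gG: "graph VG EG" using cG by (simp add: connected_graph_def)
  have L: "shortest_path VH EH u (map snd q) v" "\<forall>x\<in>set q. fst x = h"
    using layer_H[OF cH gG u v h sp] by simp_all
  have "internal (map snd q) \<inter> {g. (h, g) \<in> X} = {}"
  proof (rule ccontr)
    assume "internal (map snd q) \<inter> {g. (h, g) \<in> X} \<noteq> {}"
    then obtain g where g1: "g \<in> internal (map snd q)" and g2: "(h, g) \<in> X" by auto
    then obtain x where x: "x \<in> internal q" "g = snd x" by (auto simp: internal_map)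
    have "x \<in> set q" using internal_subset[of q] x(1) by (rule subsetD)
    then have "fst x = h" using L(2) by simp
    then have "x = (h, g)" using x(2) by (cases x) simp
    then show False using iq x(1) g2 by auto
  qed
  then show "X_visible VH EH {g. (h, g) \<in> X} u v" using L(1) unfolding X_visible_def by blast
qed



lemma count_fst:
  assumes fin: "finite S" and sub: "fst ` X \<subseteq> S" and le: "\<And>g. g \<in> S \<Longrightarrow> card {h. (g, h) \<in> X} \<le> m"
  shows "card X \<le> card S * m"
proof -
  have "X = (\<Union>g\<in>S. Pair g ` {h. (g, h) \<in> X})"
  proof
    show "X \<subseteq> (\<Union>g\<in>S. Pair g ` {h. (g, h) \<in> X})"
    proof
      fix x assume x: "x \<in> X"
      then have "fst x \<in> fst ` X" by (rule imageI)
      then have "fst x \<in> S" using sub by (rule rev_subsetD)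
      moreover have "x \<in> Pair (fst x) ` {h. (fst x, h) \<in> X}" using x by (cases x) simp
      ultimately show "x \<in> (\<Union>g\<in>S. Pair g ` {h. (g, h) \<in> X})" by (rule UN_I)
    qed
    show "(\<Union>g\<in>S. Pair g ` {h. (g, h) \<in> X}) \<subseteq> X" by auto
  qed
  then have "card X \<le> (\<Sum>g\<in>S. card (Pair g ` {h. (g, h) \<in> X}))"
    using card_UN_le[OF fin, of "\<lambda>g. Pair g ` {h. (g, h) \<in> X}"] by simp
  also have "\<dots> = (\<Sum>g\<in>S. card {h. (g, h) \<in> X})"
    by (rule sum.cong) (simp_all add: card_image inj_on_def)
  also have "\<dots> \<le> card S * m" using sum_bounded_above[of S "\<lambda>g. card {h. (g, h) \<in> X}" m] le by simp
  finally show ?thesis .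
qed

lemma count_snd:
  assumes fin: "finite S" and sub: "snd ` X \<subseteq> S" and le: "\<And>g. g \<in> S \<Longrightarrow> card {h. (h, g) \<in> X} \<le> m"
  shows "card X \<le> card S * m"
proof -
  have c: "card (prod.swap ` X) = card X" by (simp add: card_image)
  have s: "fst ` (prod.swap ` X) \<subseteq> S" using sub by (simp add: image_image)
  have "\<And>g. {h. (g, h) \<in> prod.swap ` X} = {h. (h, g) \<in> X}" by force
  then have "card (prod.swap ` X) \<le> card S * m" using count_fst[OF fin s] le by simp
  then show ?thesis using c by simp
qed

theorem theorem5p4:
  fixes VG :: "'a set" and EG :: "'a \<Rightarrow> 'a \<Rightarrow> bool"
    and VH :: "'b set" and EH :: "'b \<Rightarrow> 'b \<Rightarrow> bool"
  assumes "connected_graph VG EG" and "connected_graph VH EH"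
    and "mu_t VG EG = card (simplicial_set VG EG) \<or> mu_t VH EH = card (simplicial_set VH EH)"
  shows "mu_t (VG \<times> VH) (cart_edges EG EH) \<le> mu_t VG EG * mu_t VH EH"
proof -
  have cG: "connected_graph VG EG" and cH: "connected_graph VH EH" using assms(1,2) .
  have gG: "graph VG EG" and gH: "graph VH EH" using cG cH by (simp_all add: connected_graph_def)
  have finG: "finite VG" and finH: "finite VH" using gG gH by (simp_all add: graph_def)
  have finP: "finite (VG \<times> VH)" using finG finH by simp
  have "\<forall>x\<in>VG \<times> VH. \<forall>y\<in>VG \<times> VH. \<exists>p. walk_betw (VG \<times> VH) (cart_edges EG EH) x p y"
    using prod_walks[OF cG cH] by blast
  from mu_attained[OF finP this] obtain X where
    X: "total_mutual_visibility_set (VG \<times> VH) (cart_edges EG EH) X"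
    and cX: "card X = mu_t (VG \<times> VH) (cart_edges EG EH)" by (elim exE conjE)
  have XV: "X \<subseteq> VG \<times> VH" using X by (simp add: total_mutual_visibility_set_def)
  have fibH: "\<And>g. g \<in> VG \<Longrightarrow> card {h. (g, h) \<in> X} \<le> mu_t VH EH"
    using card_le_mu[OF finH tmv_layer_H[OF cH cG X]] by blast
  have fibG: "\<And>h. h \<in> VH \<Longrightarrow> card {g. (g, h) \<in> X} \<le> mu_t VG EG"
    using card_le_mu[OF finG tmv_layer_G[OF cG cH X]] by blast
  from assms(3) show ?thesis
  proof
    assume eq: "mu_t VG EG = card (simplicial_set VG EG)"
    let ?S = "simplicial_set VG EG"
    have SV: "?S \<subseteq> VG" by (auto simp: simplicial_set_def simplicial_def)
    then have finS: "finite ?S" using finG finite_subset by blast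
    have sub: "fst ` X \<subseteq> ?S"
    proof
      fix g assume "g \<in> fst ` X"
      then obtain h where gh: "(g, h) \<in> X" by force
      have h: "h \<in> VH" using gh XV by auto
      have "total_mutual_visibility_set VG EG {g. (g, h) \<in> X}" using tmv_layer_G[OF cG cH X h] .
      moreover have "{g} \<subseteq> {g. (g, h) \<in> X}" using gh by simp
      ultimately have "total_mutual_visibility_set VG EG {g}" by (rule tmv_subset)
      then have T: "total_mutual_visibility_set VG EG ({g} \<union> ?S)" by (rule tmv_union_simplicial[OF gG])
      show "g \<in> ?S"
      proof (rule ccontr)
        assume n: "g \<notin> ?S"
        have "card ({g} \<union> ?S) = Suc (card ?S)" using n finS by simp
        moreover have "card ({g} \<union> ?S) \<le> mu_t VG EG" using card_le_mu[OF finG T] .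
        ultimately show False using eq by simp
      qed
    qed
    have "card X \<le> card ?S * mu_t VH EH"
      using count_fst[OF finS sub] fibH SV by blast
    then show ?thesis using eq cX by simp
  next
    assume eq: "mu_t VH EH = card (simplicial_set VH EH)"
    let ?S = "simplicial_set VH EH"
    have SV: "?S \<subseteq> VH" by (auto simp: simplicial_set_def simplicial_def)
    then have finS: "finite ?S" using finH finite_subset by blast
    have sub: "snd ` X \<subseteq> ?S"
    proof
      fix h assume "h \<in> snd ` X"
      then obtain g where gh: "(g, h) \<in> X" by force
      have g: "g \<in> VG" using gh XV by auto
      have "total_mutual_visibility_set VH EH {h. (g, h) \<in> X}" using tmv_layer_H[OF cH cG X g] .
      moreover have "{h} \<subseteq> {h. (g, h) \<in> X}" using gh by simp
      ultimately have "total_mutual_visibility_set VH EH {h}" by (rule tmv_subset)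
      then have T: "total_mutual_visibility_set VH EH ({h} \<union> ?S)" by (rule tmv_union_simplicial[OF gH])
      show "h \<in> ?S"
      proof (rule ccontr)
        assume n: "h \<notin> ?S"
        have "card ({h} \<union> ?S) = Suc (card ?S)" using n finS by simp
        moreover have "card ({h} \<union> ?S) \<le> mu_t VH EH" using card_le_mu[OF finH T] .
        ultimately show False using eq by simp
      qed
    qed
    have "card X \<le> card ?S * mu_t VG EG"
      using count_snd[OF finS sub] fibG SV by blast
    then show ?thesis using eq cX by (simp add: mult.commute)
  qed
qed

end
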